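(* Let $\kappa_1<\dots<\kappa_M$ be real and let $A=(a_{k,j})$ be a real $N\times M$ matrix ($N<M$) of rank $N$ in reduced row echelon form that is totally nonnegative and irreducible, with pivot columns $I_0=\{i_1<\dots<i_N\}$. Enumerate the non-pivot nonzero entries of $A$ as $\sigma=1,\dots,\tilde g$ (data $b_\sigma,c_\sigma,\tilde\phi_\sigma$ as in the context). Define for $\sigma\ne\rho$ $$C_{\sigma,\rho}=\frac{(b_\sigma-b_\rho)(c_\sigma-c_\rho)}{(b_\sigma-c_\rho)(c_\sigma-b_\rho)}$$ (so $C_{\sigma,\rho}=0$ if the two entries lie in the same row or in the same column; formally $C_{\sigma,\rho}=e^{2\pi i\tilde\Omega_{\sigma,\rho}}$ with $\tilde\Omega_{\sigma,\rho}=+i\infty$ in that case). Then the KP $\tau$-function $\tau_A(x,y,t)=\sum_{I\in\binom{[M]}{N}}\Delta_I(A)E_I(x,y,t)$ satisfies $$\frac{\tau_A(x,y,t)}{E_{I_0}(x,y,t)}=\tilde\vartheta^{(\tilde g)}_{\tilde g}(\mathbf z;\tilde\Omega)=\sum_{\mathbf m\in\{0,1\}^{\tilde g}}\ \prod_{\sigma<\rho}C_{\sigma,\rho}^{\,m_\sigma m_\rho}\ \exp\Big(\sum_{\sigma=1}^{\tilde g}m_\sigma\tilde\phi_\sigma\Big),$$ with the convention $0^0=1$; here $2\pi i z_\sigma=\tilde\phi_\sigma(x,y,t)$.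
   Context: $\xi_j=\kappa_jx+\kappa_j^2y+\kappa_j^3t$; for $I=\{i_1<\dots<i_N\}\subset[M]$, $E_I=\prod_{a<b}(\kappa_{i_b}-\kappa_{i_a})\exp(\xi_{i_1}+\dots+\xi_{i_N})$ and $\Delta_I(A)$ is the $N\times N$ minor of $A$ on columns $I$. $A$ is totally nonnegative if all $\Delta_I(A)\ge0$; $A$ in reduced row echelon form is irreducible if each row has a nonzero entry besides its pivot and no column is zero. Row $k$ has its pivot in column $i_k$; let $j^{(k)}_1<\dots<j^{(k)}_{n_k}$ be the non-pivot columns with $a_{k,j}\ne0$, $\tilde g_k=n_1+\dots+n_k$, $\tilde g_0=0$, $\tilde g=\tilde g_N$ (the number of nonzero non-pivot entries of $A$). For $\sigma=\tilde g_{k-1}+m$ ($1\le m\le n_k$): $b_\sigma=\kappa_{i_k}$, $c_\sigma=\kappa_{j^{(k)}_m}$, $\phi_\sigma=\xi_{j^{(k)}_m}-\xi_{i_k}$, $e^{\phi^0_\sigma}=|a_{k,j^{(k)}_m}|\prod_{l\ne k}|\kappa_{i_l}-\kappa_{j^{(k)}_m}|/\prod_{l\ne k}|\kappa_{i_l}-\kappa_{i_k}|$, and $\tilde\phi_\sigma=\phi_\sigma+\phi^0_\sigma$. *)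

theory Defs
  imports "Jordan_Normal_Form.Determinant" "HOL-Library.FuncSet" "HOL-Library.Product_Lexorder"
begin

text \<open>Conventions: 0-based indices. Rows of A are 0..N-1, columns 0..M-1,
  with N = dim_row A and M = dim_col A. The spectral parameters are kappa 0 < ... < kappa (M-1).\<close>

definition xi :: "(nat \<Rightarrow> real) \<Rightarrow> nat \<Rightarrow> real \<Rightarrow> real \<Rightarrow> real \<Rightarrow> real" where
  "xi \<kappa> j x y t = \<kappa> j * x + (\<kappa> j)^2 * y + (\<kappa> j)^3 * t"

definition E_fun :: "(nat \<Rightarrow> real) \<Rightarrow> nat set \<Rightarrow> real \<Rightarrow> real \<Rightarrow> real \<Rightarrow> real" where
  "E_fun \<kappa> I x y t =
     (\<Prod>(a,b) \<in> {(a,b). a \<in> I \<and> b \<in> I \<and> a < b}. \<kappa> b - \<kappa> a) * exp (\<Sum>i\<in>I. xi \<kappa> i x y t)"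

definition minor :: "real mat \<Rightarrow> nat set \<Rightarrow> real" where
  "minor A I = det (mat (dim_row A) (dim_row A) (\<lambda>(k,l). A $$ (k, sorted_list_of_set I ! l)))"

definition totally_nonneg :: "real mat \<Rightarrow> bool" where
  "totally_nonneg A \<longleftrightarrow>
     (\<forall>I. I \<subseteq> {..<dim_col A} \<and> card I = dim_row A \<longrightarrow> minor A I \<ge> 0)"

definition rref_with_pivots :: "real mat \<Rightarrow> (nat \<Rightarrow> nat) \<Rightarrow> bool" where
  "rref_with_pivots A piv \<longleftrightarrow>
     (\<forall>k<dim_row A. piv k < dim_col A) \<and>
     (\<forall>k l. k < l \<and> l < dim_row A \<longrightarrow> piv k < piv l) \<and>
     (\<forall>k<dim_row A. A $$ (k, piv k) = 1) \<and>
     (\<forall>k<dim_row A. \<forall>l<dim_row A. l \<noteq> k \<longrightarrow> A $$ (l, piv k) = 0) \<and>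
     (\<forall>k<dim_row A. \<forall>j<piv k. A $$ (k, j) = 0)"

definition irreducible_rref :: "real mat \<Rightarrow> (nat \<Rightarrow> nat) \<Rightarrow> bool" where
  "irreducible_rref A piv \<longleftrightarrow>
     (\<forall>k<dim_row A. \<exists>j<dim_col A. j \<noteq> piv k \<and> A $$ (k, j) \<noteq> 0) \<and>
     (\<forall>j<dim_col A. \<exists>k<dim_row A. A $$ (k, j) \<noteq> 0)"

definition tau :: "real mat \<Rightarrow> (nat \<Rightarrow> real) \<Rightarrow> real \<Rightarrow> real \<Rightarrow> real \<Rightarrow> real" where
  "tau A \<kappa> x y t =
     (\<Sum>I \<in> {I. I \<subseteq> {..<dim_col A} \<and> card I = dim_row A}. minor A I * E_fun \<kappa> I x y t)"

text \<open>Non-pivot nonzero entries (row, column), enumerated row by row and within a row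
  by increasing column (lexicographic order on pairs).\<close>
definition nz_entries :: "real mat \<Rightarrow> (nat \<Rightarrow> nat) \<Rightarrow> (nat \<times> nat) list" where
  "nz_entries A piv = sorted_list_of_set
     {(k,j). k < dim_row A \<and> j < dim_col A \<and> j \<notin> piv ` {..<dim_row A} \<and> A $$ (k,j) \<noteq> 0}"

definition gtilde :: "real mat \<Rightarrow> (nat \<Rightarrow> nat) \<Rightarrow> nat" where
  "gtilde A piv = length (nz_entries A piv)"

definition b_par :: "real mat \<Rightarrow> (nat \<Rightarrow> nat) \<Rightarrow> (nat \<Rightarrow> real) \<Rightarrow> nat \<Rightarrow> real" where
  "b_par A piv \<kappa> \<sigma> = \<kappa> (piv (fst (nz_entries A piv ! \<sigma>)))"

definition c_par :: "real mat \<Rightarrow> (nat \<Rightarrow> nat) \<Rightarrow> (nat \<Rightarrow> real) \<Rightarrow> nat \<Rightarrow> real" where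
  "c_par A piv \<kappa> \<sigma> = \<kappa> (snd (nz_entries A piv ! \<sigma>))"

definition phi0 :: "real mat \<Rightarrow> (nat \<Rightarrow> nat) \<Rightarrow> (nat \<Rightarrow> real) \<Rightarrow> nat \<Rightarrow> real" where
  "phi0 A piv \<kappa> \<sigma> =
     (let (k, j) = nz_entries A piv ! \<sigma> in
      ln (\<bar>A $$ (k, j)\<bar> * (\<Prod>l \<in> {..<dim_row A} - {k}. \<bar>\<kappa> (piv l) - \<kappa> j\<bar>)
          / (\<Prod>l \<in> {..<dim_row A} - {k}. \<bar>\<kappa> (piv l) - \<kappa> (piv k)\<bar>)))"

definition phi_tilde :: "real mat \<Rightarrow> (nat \<Rightarrow> nat) \<Rightarrow> (nat \<Rightarrow> real) \<Rightarrow> nat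
    \<Rightarrow> real \<Rightarrow> real \<Rightarrow> real \<Rightarrow> real" where
  "phi_tilde A piv \<kappa> \<sigma> x y t =
     (let (k, j) = nz_entries A piv ! \<sigma> in
      xi \<kappa> j x y t - xi \<kappa> (piv k) x y t + phi0 A piv \<kappa> \<sigma>)"

definition C_coef :: "real mat \<Rightarrow> (nat \<Rightarrow> nat) \<Rightarrow> (nat \<Rightarrow> real) \<Rightarrow> nat \<Rightarrow> nat \<Rightarrow> real" where
  "C_coef A piv \<kappa> \<sigma> \<rho> =
     (b_par A piv \<kappa> \<sigma> - b_par A piv \<kappa> \<rho>) * (c_par A piv \<kappa> \<sigma> - c_par A piv \<kappa> \<rho>) /
     ((b_par A piv \<kappa> \<sigma> - c_par A piv \<kappa> \<rho>) * (c_par A piv \<kappa> \<sigma> - b_par A piv \<kappa> \<rho>))"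

text \<open>The (degenerate) Riemann theta function; note 0^0 = 1 in Isabelle.\<close>
definition theta_tilde :: "real mat \<Rightarrow> (nat \<Rightarrow> nat) \<Rightarrow> (nat \<Rightarrow> real) \<Rightarrow> real \<Rightarrow> real \<Rightarrow> real \<Rightarrow> real" where
  "theta_tilde A piv \<kappa> x y t =
     (let g = gtilde A piv in
      \<Sum>m \<in> {..<g} \<rightarrow>\<^sub>E {0::nat, 1}.
        (\<Prod>\<sigma><g. \<Prod>\<rho>\<in>{\<sigma><..<g}. C_coef A piv \<kappa> \<sigma> \<rho> ^ (m \<sigma> * m \<rho>)) *
        exp (\<Sum>\<sigma><g. real (m \<sigma>) * phi_tilde A piv \<kappa> \<sigma> x y t))"

end

theory Submission
  imports Defs
begin



definition P2 :: "nat \<Rightarrow> (nat\<times>nat) set" where "P2 n = {(a,b). a<b \<and> b<n}"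
definition VF :: "(nat \<Rightarrow> real) \<Rightarrow> nat \<Rightarrow> real" where "VF x n = (\<Prod>(a,b)\<in>P2 n. x b - x a)"
definition sgnp :: "(nat\<Rightarrow>nat) \<Rightarrow> nat \<Rightarrow> real" where
  "sgnp q n = (\<Prod>(a,b)\<in>P2 n. if q a < q b then 1 else -1)"

lemma finite_P2[simp]: "finite (P2 n)"
proof -
  have "P2 n \<subseteq> {..<n} \<times> {..<n}" unfolding P2_def by auto
  thus ?thesis by (rule finite_subset) auto
qed

lemma VF_reindex:
  assumes q: "q permutes {..<n}"
  shows "VF (x \<circ> q) n = sgnp q n * VF x n"
proof -
  define g where "g = (\<lambda>(a,b). (min (q a) (q b), max (q a) (q b)))"
  have qin: "\<And>a. a < n \<Longrightarrow> q a < n" using q by (meson lessThan_iff permutes_in_image)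
  have qinj: "\<And>a b. q a = q b \<Longrightarrow> a = b" using q by (meson permutes_inj injD)
  have minmax: "\<And>u v::nat. {min u v, max u v} = {u, v}" by (auto simp: min_def max_def)
  have gin: "g ` P2 n \<subseteq> P2 n"
  proof
    fix z assume "z \<in> g ` P2 n"
    then obtain a b where ab: "a<b" "b<n" "z = g (a,b)" unfolding P2_def by auto
    have ne: "q a \<noteq> q b" using ab qinj by (metis less_irrefl)
    have 1: "min (q a) (q b) < max (q a) (q b)" using ne by (cases "q a < q b") (simp_all add: min_def max_def)
    have 2: "max (q a) (q b) < n" using qin ab by simp
    show "z \<in> P2 n" using 1 2 unfolding g_def P2_def ab(3) by simp
  qed
  have ginj: "inj_on g (P2 n)"
  proof (rule inj_onI)
    fix u v assume u: "u \<in> P2 n" and v: "v \<in> P2 n" and e: "g u = g v"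
    obtain a b where uab: "u = (a,b)" and ab: "a<b" using u unfolding P2_def by blast
    obtain c d where vcd: "v = (c,d)" and cd: "c<d" using v unfolding P2_def by blast
    from e have "min (q a) (q b) = min (q c) (q d)" "max (q a) (q b) = max (q c) (q d)"
      unfolding g_def uab vcd by simp_all
    hence "{min (q a) (q b), max (q a) (q b)} = {min (q c) (q d), max (q c) (q d)}" by simp
    hence e2: "{q a, q b} = {q c, q d}" by (simp only: minmax)
    have "q a = q c \<or> q a = q d" "q b = q c \<or> q b = q d" using e2 by blast+
    hence "(a = c \<or> a = d) \<and> (b = c \<or> b = d)" using qinj by blast
    hence "a = c \<and> b = d" using ab cd by auto
    thus "u = v" using uab vcd by simp
  qed
  have gbij: "bij_betw g (P2 n) (P2 n)"
    using ginj gin by (simp add: bij_betw_def endo_inj_surj)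
  have "VF (x \<circ> q) n = (\<Prod>z\<in>P2 n. (if q (fst z) < q (snd z) then 1 else -1) *
           ((\<lambda>(a,b). x b - x a) (g z)))"
    unfolding VF_def
  proof (rule prod.cong[OF refl])
    fix z assume "z \<in> P2 n"
    obtain a b where z: "z = (a,b)" by fastforce
    show "(\<lambda>(a,b). (x \<circ> q) b - (x \<circ> q) a) z = (if q (fst z) < q (snd z) then 1 else -1) * ((\<lambda>(a,b). x b - x a) (g z))"
      unfolding z g_def by (cases "q a < q b") (simp_all add: min_def max_def)
  qed
  also have "\<dots> = sgnp q n * (\<Prod>z\<in>P2 n. (\<lambda>(a,b). x b - x a) (g z))"
    unfolding prod.distrib sgnp_def by (simp add: case_prod_beta')
  also have "(\<Prod>z\<in>P2 n. (\<lambda>(a,b). x b - x a) (g z)) = VF x n"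
    unfolding VF_def using prod.reindex_bij_betw[OF gbij, of "\<lambda>(a,b). x b - x a"] by simp
  finally show ?thesis .
qed

lemma VF_real_nz: "VF real n \<noteq> 0"
  unfolding VF_def by (subst prod_zero_iff[OF finite_P2]) (auto simp: P2_def)

lemma sgnp_mult:
  assumes "p permutes {..<n}" "q permutes {..<n}"
  shows "sgnp (q \<circ> p) n = sgnp q n * sgnp p n"
proof -
  have qp: "q \<circ> p permutes {..<n}" using assms by (simp add: permutes_compose)
  have "VF (real \<circ> (q \<circ> p)) n = sgnp (q \<circ> p) n * VF real n" by (rule VF_reindex[OF qp])
  moreover have "VF (real \<circ> (q \<circ> p)) n = VF ((real \<circ> q) \<circ> p) n" by (simp add: comp_assoc)
  moreover have "\<dots> = sgnp p n * (sgnp q n * VF real n)"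
    using VF_reindex[OF assms(1)] VF_reindex[OF assms(2)] by simp
  ultimately show ?thesis using VF_real_nz by (metis mult.assoc mult.commute mult_right_cancel)
qed

lemma sgnp_transpose:
  assumes ij: "i < j" "j < n"
  shows "sgnp (Transposition.transpose i j) n = -1"
proof -
  let ?t = "Transposition.transpose i j"
  define Inv where "Inv = ({i} \<times> {i<..j}) \<union> ({i<..<j} \<times> {j})"
  have eq: "{z \<in> P2 n. \<not> (?t (fst z) < ?t (snd z))} = Inv"
    using ij unfolding Inv_def P2_def by (auto simp: Transposition.transpose_def split: if_splits)
  have "sgnp ?t n = (\<Prod>z\<in>P2 n. if ?t (fst z) < ?t (snd z) then 1 else -1)"
    unfolding sgnp_def by (simp add: case_prod_beta')
  also have "\<dots> = (\<Prod>z\<in>{z \<in> P2 n. \<not> (?t (fst z) < ?t (snd z))}. -1)"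
    by (rule prod.mono_neutral_cong_right) auto
  also have "\<dots> = (-1) ^ card Inv" using eq by simp
  also have "card Inv = (j - i) + (j - i - 1)"
  proof -
    have "card Inv = card ({i} \<times> {i<..j}) + card ({i<..<j} \<times> {j})"
      unfolding Inv_def by (rule card_Un_disjoint) auto
    thus ?thesis by (simp add: card_cartesian_product)
  qed
  also have "(j - i) + (j - i - 1) = Suc (2 * (j - i - 1))" using ij by simp
  finally show ?thesis by simp
qed

lemma sgnp_signof:
  assumes "p permutes {..<n}"
  shows "sgnp p n = signof p"
  using assms finite_lessThan
proof (induction rule: permutes_induct)
  case id
  have "sgnp id n = 1" unfolding sgnp_def by (intro prod.neutral) (auto simp: P2_def)
  then show ?case by (simp add: id_def)
next
  case (swap a b p)
  have ta: "Transposition.transpose a b permutes {..<n}" using swap by (simp add: permutes_swap_id)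
  have st: "sgnp (Transposition.transpose a b) n = -1"
  proof (cases "a < b")
    case True thus ?thesis using sgnp_transpose swap by auto
  next
    case False
    then have "b < a" using swap by simp
    thus ?thesis using sgnp_transpose[of b a n] swap by (simp add: transpose_commute)
  qed
  from swap have pp: "p permutes {..<n}" by blast
  have "sgnp (Transposition.transpose a b \<circ> p) n = - sgnp p n"
    using sgnp_mult[OF pp ta] st by simp
  moreover have "sign (Transposition.transpose a b \<circ> p) = - sign p"
    using sign_compose[OF permutation_swap_id permutes_imp_permutation[OF finite_lessThan pp]] sign_swap_id[of a b] swap by simp
  moreover from swap have ih: "sgnp p n = signof p" by blast
  ultimately show ?case by (simp only: of_int_minus)
qed

lemma VF_perm:
  assumes "p permutes {..<n}"
  shows "VF (x \<circ> p) n = signof p * VF x n"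
  using VF_reindex[OF assms] sgnp_signof[OF assms] by simp




lemma VF_cong: "(\<And>k. k < n \<Longrightarrow> x k = y k) \<Longrightarrow> VF x n = VF y n"
  unfolding VF_def P2_def by (intro prod.cong) auto

lemma VF_zero: "a < n \<Longrightarrow> b < n \<Longrightarrow> a \<noteq> b \<Longrightarrow> x a = x b \<Longrightarrow> VF x n = 0"
  unfolding VF_def
  apply (subst prod_zero_iff[OF finite_P2])
  apply (cases "a < b")
   apply (rule bexI[of _ "(a,b)"]; simp add: P2_def)
  apply (rule bexI[of _ "(b,a)"]; simp add: P2_def)
  done

lemma E_fun_mono:
  assumes mono: "\<And>a b. a < b \<Longrightarrow> b < n \<Longrightarrow> f a < f b" and I: "I = f ` {..<n}"
  shows "E_fun \<kappa> I x y t = VF (\<kappa> \<circ> f) n * exp (\<Sum>k<n. xi \<kappa> (f k) x y t)"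
proof -
  have inj: "inj_on f {..<n}"
    by (rule inj_onI) (metis lessThan_iff linorder_neqE_nat mono order_less_irrefl)
  have pairs: "{(a,b). a \<in> I \<and> b \<in> I \<and> a < b} = (\<lambda>(a,b). (f a, f b)) ` P2 n"
  proof
    show "{(a,b). a \<in> I \<and> b \<in> I \<and> a < b} \<subseteq> (\<lambda>(a,b). (f a, f b)) ` P2 n"
    proof
      fix z assume "z \<in> {(a,b). a \<in> I \<and> b \<in> I \<and> a < b}"
      then obtain a b where z: "z = (f a, f b)" "a < n" "b < n" "f a < f b" using I by auto
      have "a < b" using z mono by (metis linorder_neqE_nat order_less_asym)
      thus "z \<in> (\<lambda>(a,b). (f a, f b)) ` P2 n" using z unfolding P2_def by auto
    qed
  next
    show "(\<lambda>(a,b). (f a, f b)) ` P2 n \<subseteq> {(a,b). a \<in> I \<and> b \<in> I \<and> a < b}"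
      using mono I unfolding P2_def by auto
  qed
  have pinj: "inj_on (\<lambda>(a,b). (f a, f b)) (P2 n)"
    using inj unfolding P2_def inj_on_def by auto
  have "(\<Prod>(a,b) \<in> {(a,b). a \<in> I \<and> b \<in> I \<and> a < b}. \<kappa> b - \<kappa> a) = VF (\<kappa> \<circ> f) n"
    unfolding pairs VF_def using prod.reindex[OF pinj, of "\<lambda>(a,b). \<kappa> b - \<kappa> a"]
    by (simp add: case_prod_beta')
  moreover have "(\<Sum>i\<in>I. xi \<kappa> i x y t) = (\<Sum>k<n. xi \<kappa> (f k) x y t)"
    unfolding I using sum.reindex[OF inj] by simp
  ultimately show ?thesis unfolding E_fun_def by simp
qed

lemma sorted_nth_mono:
  assumes "finite I" "a < b" "b < card I"
  shows "sorted_list_of_set I ! a < sorted_list_of_set I ! b"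
  using assms sorted_wrt_nth_less[OF sorted_list_of_set.strict_sorted_key_list_of_set] by auto

lemma sorted_image:
  assumes "finite I" shows "(!) (sorted_list_of_set I) ` {..<card I} = I"
  using assms bij_betw_imp_surj_on[OF bij_betw_nth[of "sorted_list_of_set I" "{..<card I}" I]] by simp




definition InjI :: "nat \<Rightarrow> nat set \<Rightarrow> (nat \<Rightarrow> nat) set" where
  "InjI n I = {c \<in> {..<n} \<rightarrow>\<^sub>E I. inj_on c {..<n} \<and> c ` {..<n} = I}"

lemma minor_VF:
  assumes fin: "finite I" and card: "card I = dim_row A"
  shows "minor A I * VF (\<kappa> \<circ> (!) (sorted_list_of_set I)) (dim_row A)
     = (\<Sum>c\<in>InjI (dim_row A) I. (\<Prod>k<dim_row A. A $$ (k, c k)) * VF (\<kappa> \<circ> c) (dim_row A))"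
proof -
  define n where "n = dim_row A"
  define s where "s = sorted_list_of_set I"
  have len: "length s = n" unfolding s_def n_def using card by simp
  have dist: "distinct s" unfolding s_def by simp
  have sI: "set s = I" unfolding s_def using fin by simp
  have bs: "bij_betw ((!) s) {..<n} I" by (rule bij_betw_nth[OF dist]) (simp_all add: len sI)
  have injs: "inj_on ((!) s) {..<n}" using bij_betw_imp_inj_on[OF bs] .
  have ims: "(!) s ` {..<n} = I" using bij_betw_imp_surj_on[OF bs] .
  let ?P = "{p. p permutes {..<n}}"
  have pin: "\<And>p i. p permutes {..<n} \<Longrightarrow> i<n \<Longrightarrow> p i < n" by (metis lessThan_iff permutes_in_image)
  have "minor A I = (\<Sum>p\<in>?P. signof p * (\<Prod>i<n. A $$ (i, s ! p i)))"
    unfolding minor_def n_def[symmetric] s_def[symmetric]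
    apply (subst det_def'[of _ n])
     apply simp
    apply (simp only: atLeast0LessThan)
    apply (intro sum.cong refl arg_cong2[where f="(*)"] prod.cong)
    apply (simp add: pin)
    done
  hence "minor A I * VF (\<kappa> \<circ> (!) s) n = (\<Sum>p\<in>?P. (signof p * VF (\<kappa> \<circ> (!) s) n) * (\<Prod>i<n. A $$ (i, s ! p i)))"
    by (simp add: sum_distrib_left sum_distrib_right mult_ac)
  also have "\<dots> = (\<Sum>p\<in>?P. (\<Prod>i<n. A $$ (i, s ! p i)) * VF (\<kappa> \<circ> (!) s \<circ> p) n)"
    by (intro sum.cong refl) (simp add: VF_perm)
  also have "\<dots> = (\<Sum>c\<in>InjI n I. (\<Prod>k<n. A $$ (k, c k)) * VF (\<kappa> \<circ> c) n)"
  proof -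
    define cm where "cm = (\<lambda>p. restrict (\<lambda>k. s ! p k) {..<n})"
    define iv where "iv = (\<lambda>c k. if k < n then the_inv_into {..<n} ((!) s) (c k) else k)"
    have bij: "bij_betw cm ?P (InjI n I)"
    proof (rule bij_betw_byWitness[where f'=iv])
      show "\<forall>p\<in>?P. iv (cm p) = p"
      proof
        fix p assume "p \<in> ?P"
        hence p: "p permutes {..<n}" by simp
        show "iv (cm p) = p"
        proof
          fix k show "iv (cm p) k = p k"
          proof (cases "k < n")
            case True
            then show ?thesis using p injs pin[OF p True] by (simp add: iv_def cm_def the_inv_into_f_f)
          next
            case False
            then show ?thesis using p by (simp add: iv_def cm_def permutes_not_in)
          qed
        qed
      qed
      show "\<forall>c\<in>InjI n I. cm (iv c) = c"
      proof
        fix c assume c: "c \<in> InjI n I"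
        show "cm (iv c) = c"
        proof
          fix k show "cm (iv c) k = c k"
          proof (cases "k < n")
            case True
            then have "c k \<in> I" using c unfolding InjI_def by auto
            then show ?thesis using True ims injs by (auto simp: iv_def cm_def f_the_inv_into_f)
          next
            case False
            then show ?thesis using c unfolding InjI_def cm_def by (auto simp: PiE_def extensional_def)
          qed
        qed
      qed
      show "cm ` ?P \<subseteq> InjI n I"
      proof
        fix c assume "c \<in> cm ` ?P"
        then obtain p where p: "p permutes {..<n}" and c: "c = cm p" by auto
        have pim: "p ` {..<n} = {..<n}" using p permutes_image by blast
        have "c \<in> {..<n} \<rightarrow>\<^sub>E I" unfolding c cm_def using ims pin[OF p] by auto
        moreover have "inj_on c {..<n}"
        proof -
          have "inj_on ((!) s \<circ> p) {..<n}"
            using injs p pim by (metis comp_inj_on permutes_inj_on)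
          thus ?thesis unfolding c cm_def inj_on_def by auto
        qed
        moreover have "c ` {..<n} = I"
        proof -
          have "c ` {..<n} = (!) s ` (p ` {..<n})" unfolding c cm_def by (auto simp: image_image)
          thus ?thesis using pim ims by simp
        qed
        ultimately show "c \<in> InjI n I" unfolding InjI_def by simp
      qed
      show "iv ` InjI n I \<subseteq> ?P"
      proof
        fix p assume "p \<in> iv ` InjI n I"
        then obtain c where c: "c \<in> InjI n I" and p: "p = iv c" by auto
        have bc: "bij_betw c {..<n} I" using c unfolding InjI_def bij_betw_def by auto
        have "bij_betw (the_inv_into {..<n} ((!) s) \<circ> c) {..<n} {..<n}"
          by (rule bij_betw_trans[OF bc bij_betw_the_inv_into[OF bs]])
        hence "bij_betw p {..<n} {..<n}"
          by (rule bij_betw_cong[THEN iffD1, rotated]) (auto simp: p iv_def)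
        hence "p permutes {..<n}" by (rule bij_imp_permutes) (auto simp: p iv_def)
        thus "p \<in> ?P" by simp
      qed
    qed
    have "(\<Sum>c\<in>InjI n I. (\<Prod>k<n. A $$ (k, c k)) * VF (\<kappa> \<circ> c) n)
        = (\<Sum>p\<in>?P. (\<Prod>k<n. A $$ (k, cm p k)) * VF (\<kappa> \<circ> cm p) n)"
      using sum.reindex_bij_betw[OF bij, of "\<lambda>c. (\<Prod>k<n. A $$ (k, c k)) * VF (\<kappa> \<circ> c) n"] by simp
    also have "\<dots> = (\<Sum>p\<in>?P. (\<Prod>i<n. A $$ (i, s ! p i)) * VF (\<kappa> \<circ> (!) s \<circ> p) n)"
      by (intro sum.cong refl arg_cong2[where f="(*)"] prod.cong VF_cong) (auto simp: cm_def)
    finally show ?thesis by simp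
  qed
  finally show ?thesis unfolding n_def s_def .
qed




definition Lc :: "real mat \<Rightarrow> (nat\<Rightarrow>real) \<Rightarrow> real \<Rightarrow> real \<Rightarrow> real \<Rightarrow> (nat\<Rightarrow>nat) \<Rightarrow> real" where
  "Lc A \<kappa> x y t c = (\<Prod>k<dim_row A. A $$ (k, c k)) * VF (\<kappa> \<circ> c) (dim_row A)
      * exp (\<Sum>k<dim_row A. xi \<kappa> (c k) x y t)"

definition InjS :: "nat \<Rightarrow> nat \<Rightarrow> (nat \<Rightarrow> nat) set" where
  "InjS n M = {c \<in> {..<n} \<rightarrow>\<^sub>E {..<M}. inj_on c {..<n}}"

lemma finite_InjS: "finite (InjS n M)"
  unfolding InjS_def by (rule finite_subset[OF _ finite_PiE[of "{..<n}" "\<lambda>_. {..<M}"]]) auto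

lemma tau_expand:
  "tau A \<kappa> x y t = (\<Sum>c\<in>InjS (dim_row A) (dim_col A). Lc A \<kappa> x y t c)"
proof -
  define n where "n = dim_row A"
  define M where "M = dim_col A"
  define Sets where "Sets = {I. I \<subseteq> {..<M} \<and> card I = n}"
  have finSets: "finite Sets"
    unfolding Sets_def by (rule finite_subset[of _ "Pow {..<M}"]) auto
  have step: "minor A I * E_fun \<kappa> I x y t = (\<Sum>c\<in>InjI n I. Lc A \<kappa> x y t c)" if I: "I \<in> Sets" for I
  proof -
    have fin: "finite I" and cI: "card I = n" and IM: "I \<subseteq> {..<M}" using I unfolding Sets_def
      by (auto intro: finite_subset)
    define s where "s = sorted_list_of_set I"
    have mono: "\<And>a b. a < b \<Longrightarrow> b < n \<Longrightarrow> s ! a < s ! b"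
      unfolding s_def using sorted_nth_mono[OF fin] cI by simp
    have im: "I = (!) s ` {..<n}" unfolding s_def using sorted_image[OF fin] cI by simp
    have E: "E_fun \<kappa> I x y t = VF (\<kappa> \<circ> (!) s) n * exp (\<Sum>k<n. xi \<kappa> (s ! k) x y t)"
      by (rule E_fun_mono[OF mono im])
    have injs: "inj_on ((!) s) {..<n}"
      by (rule inj_onI) (metis lessThan_iff linorder_neqE_nat mono order_less_irrefl)
    have sumI: "(\<Sum>k<n. xi \<kappa> (s ! k) x y t) = (\<Sum>i\<in>I. xi \<kappa> i x y t)"
      unfolding im using sum.reindex[OF injs, of "\<lambda>i. xi \<kappa> i x y t"] by simp
    have "minor A I * E_fun \<kappa> I x y t
        = (minor A I * VF (\<kappa> \<circ> (!) s) n) * exp (\<Sum>i\<in>I. xi \<kappa> i x y t)"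
      using E sumI by simp
    also have "\<dots> = (\<Sum>c\<in>InjI n I. (\<Prod>k<n. A $$ (k, c k)) * VF (\<kappa> \<circ> c) n) * exp (\<Sum>i\<in>I. xi \<kappa> i x y t)"
      using minor_VF[OF fin cI[unfolded n_def]] unfolding s_def n_def by simp
    also have "\<dots> = (\<Sum>c\<in>InjI n I. Lc A \<kappa> x y t c)"
      unfolding sum_distrib_right
    proof (intro sum.cong refl)
      fix c assume c: "c \<in> InjI n I"
      have ic: "inj_on c {..<n}" and imc: "c ` {..<n} = I" using c unfolding InjI_def by auto
      have "(\<Sum>i\<in>I. xi \<kappa> i x y t) = (\<Sum>k<n. xi \<kappa> (c k) x y t)"
        unfolding imc[symmetric] using sum.reindex[OF ic, of "\<lambda>i. xi \<kappa> i x y t"] by simp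
      thus "(\<Prod>k<n. A $$ (k, c k)) * VF (\<kappa> \<circ> c) n * exp (\<Sum>i\<in>I. xi \<kappa> i x y t) = Lc A \<kappa> x y t c"
        unfolding Lc_def n_def by simp
    qed
    finally show ?thesis .
  qed
  have "tau A \<kappa> x y t = (\<Sum>I\<in>Sets. minor A I * E_fun \<kappa> I x y t)"
    unfolding tau_def Sets_def n_def M_def by simp
  also have "\<dots> = (\<Sum>I\<in>Sets. \<Sum>c\<in>InjI n I. Lc A \<kappa> x y t c)"
    by (rule sum.cong[OF refl step])
  also have "\<dots> = (\<Sum>I\<in>Sets. \<Sum>c\<in>{c \<in> InjS n M. c ` {..<n} = I}. Lc A \<kappa> x y t c)"
  proof (rule sum.cong[OF refl])
    fix I assume I: "I \<in> Sets"
    hence IM: "I \<subseteq> {..<M}" unfolding Sets_def by auto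
    have "InjI n I = {c \<in> InjS n M. c ` {..<n} = I}"
      unfolding InjI_def InjS_def using IM by (auto simp: PiE_iff)
    thus "(\<Sum>c\<in>InjI n I. Lc A \<kappa> x y t c) = (\<Sum>c\<in>{c \<in> InjS n M. c ` {..<n} = I}. Lc A \<kappa> x y t c)"
      by simp
  qed
  also have "\<dots> = (\<Sum>c\<in>InjS n M. Lc A \<kappa> x y t c)"
  proof (rule sum.group[OF finite_InjS finSets])
    show "(\<lambda>c. c ` {..<n}) ` InjS n M \<subseteq> Sets"
    proof
      fix I assume "I \<in> (\<lambda>c. c ` {..<n}) ` InjS n M"
      then obtain c where c: "c \<in> InjS n M" and I: "I = c ` {..<n}" by auto
      have "I \<subseteq> {..<M}" using c I unfolding InjS_def by auto
      moreover have "card I = n" using c I card_image[of c "{..<n}"] unfolding InjS_def by auto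
      ultimately show "I \<in> Sets" unfolding Sets_def by simp
    qed
  qed
  finally show ?thesis unfolding n_def M_def .
qed




lemma prod_offdiag:
  fixes f :: "nat \<Rightarrow> nat \<Rightarrow> 'a::comm_monoid_mult"
  shows "(\<Prod>k<n. \<Prod>l\<in>{..<n}-{k}. f k l) = (\<Prod>(a,b)\<in>P2 n. f a b * f b a)"
proof -
  have off: "Sigma {..<n} (\<lambda>k. {..<n}-{k}) = P2 n \<union> (\<lambda>(a,b). (b,a)) ` P2 n"
    unfolding P2_def by (auto simp: image_iff)
  have disj: "P2 n \<inter> (\<lambda>(a,b). (b,a)) ` P2 n = {}" unfolding P2_def by auto
  have inj: "inj_on (\<lambda>(a,b). (b,a)) (P2 n)" unfolding inj_on_def by auto
  have "(\<Prod>k<n. \<Prod>l\<in>{..<n}-{k}. f k l) = (\<Prod>z\<in>Sigma {..<n} (\<lambda>k. {..<n}-{k}). f (fst z) (snd z))"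
    by (subst prod.Sigma) (auto simp: case_prod_beta')
  also have "\<dots> = (\<Prod>z\<in>P2 n. f (fst z) (snd z)) * (\<Prod>z\<in>(\<lambda>(a,b). (b,a)) ` P2 n. f (fst z) (snd z))"
    unfolding off by (rule prod.union_disjoint) (auto simp: disj)
  also have "(\<Prod>z\<in>(\<lambda>(a,b). (b,a)) ` P2 n. f (fst z) (snd z)) = (\<Prod>z\<in>P2 n. f (snd z) (fst z))"
    using prod.reindex[OF inj, of "\<lambda>z. f (fst z) (snd z)"] by (simp add: case_prod_beta')
  finally show ?thesis by (simp add: prod.distrib case_prod_beta')
qed

lemma both_case:
  fixes P Q u v :: real
  assumes "Q - P \<noteq> 0" "P - v \<noteq> 0" "u - Q \<noteq> 0"
  shows "v - u = (Q - P) * ((Q - u) / (Q - P) * ((P - v) / (P - Q))) * ((P - Q) * (u - v) / ((P - v) * (u - Q)))"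
proof -
  have a: "P - Q \<noteq> 0" "Q - u \<noteq> 0" using assms by auto
  show ?thesis using assms a by (simp add: divide_simps) (simp add: algebra_simps)
qed

definition Cr :: "(nat \<Rightarrow> real) \<Rightarrow> (nat \<Rightarrow> real) \<Rightarrow> nat \<Rightarrow> nat \<Rightarrow> real" where
  "Cr p y a b = (p a - p b) * (y a - y b) / ((p a - y b) * (y a - p b))"

lemma VF_ratio:
  assumes R: "R \<subseteq> {..<n}"
    and yp: "\<And>k. k < n \<Longrightarrow> k \<notin> R \<Longrightarrow> y k = p k"
    and pinj: "\<And>a b. a < n \<Longrightarrow> b < n \<Longrightarrow> a \<noteq> b \<Longrightarrow> p a \<noteq> p b"
    and py: "\<And>a b. a < n \<Longrightarrow> b < n \<Longrightarrow> a \<noteq> b \<Longrightarrow> b \<in> R \<Longrightarrow> p a \<noteq> y b"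
  shows "VF y n = VF p n * (\<Prod>k\<in>R. \<Prod>l\<in>{..<n}-{k}. (p l - y k) / (p l - p k))
                 * (\<Prod>(a,b)\<in>P2 n \<inter> (R \<times> R). Cr p y a b)"
proof -
  define h where "h = (\<lambda>k l. (p l - y k) / (p l - p k))"
  have 1: "(\<Prod>k\<in>R. \<Prod>l\<in>{..<n}-{k}. h k l) = (\<Prod>k<n. \<Prod>l\<in>{..<n}-{k}. h k l)"
  proof (rule prod.mono_neutral_left)
    show "\<forall>k\<in>{..<n} - R. (\<Prod>l\<in>{..<n}-{k}. h k l) = 1"
    proof
      fix k assume k: "k \<in> {..<n} - R"
      show "(\<Prod>l\<in>{..<n}-{k}. h k l) = 1"
        using k yp[of k] pinj[of _ k] by (intro prod.neutral) (auto simp: h_def)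
    qed
  qed (use R in auto)
  have 2: "(\<Prod>(a,b)\<in>P2 n \<inter> (R \<times> R). Cr p y a b) = (\<Prod>(a,b)\<in>P2 n. if a \<in> R \<and> b \<in> R then Cr p y a b else 1)"
    by (rule prod.mono_neutral_cong_left) (auto split: if_splits)
  have 3: "(y b - y a) = (p b - p a) * (h a b * h b a) * (if a \<in> R \<and> b \<in> R then Cr p y a b else 1)"
    if ab: "(a,b) \<in> P2 n" for a b
  proof -
    have abn: "a < b" "b < n" using ab unfolding P2_def by auto
    have d1: "p b - p a \<noteq> 0" "p a - p b \<noteq> 0" using pinj[of a b] abn by auto
    consider (both) "a \<in> R" "b \<in> R" | (na) "a \<notin> R" | (nb) "a \<in> R" "b \<notin> R" by blast
    then show ?thesis
    proof cases
      case both
      have d2: "p a - y b \<noteq> 0" "p b - y a \<noteq> 0" "y a - p b \<noteq> 0"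
        using py[of a b] py[of b a] abn both by auto
      show ?thesis using both both_case[of "p b" "p a" "y b" "y a"] d1 d2 unfolding h_def Cr_def by simp
    next
      case na
      then have "y a = p a" using yp abn by simp
      then show ?thesis using na d1 unfolding h_def by (simp add: field_simps)
    next
      case nb
      then have "y b = p b" using yp abn by simp
      then show ?thesis using nb d1 unfolding h_def by (simp add: field_simps)
    qed
  qed
  have "VF y n = (\<Prod>(a,b)\<in>P2 n. (p b - p a) * (h a b * h b a) * (if a \<in> R \<and> b \<in> R then Cr p y a b else 1))"
    unfolding VF_def by (rule prod.cong[OF refl]) (use 3 in auto)
  also have "\<dots> = VF p n * (\<Prod>(a,b)\<in>P2 n. h a b * h b a) * (\<Prod>(a,b)\<in>P2 n. if a \<in> R \<and> b \<in> R then Cr p y a b else 1)"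
    unfolding VF_def prod.distrib[symmetric] by (simp add: case_prod_beta')
  moreover have 1: "(\<Prod>k\<in>R. \<Prod>l\<in>{..<n}-{k}. (p l - y k) / (p l - p k)) = (\<Prod>(a,b)\<in>P2 n. h a b * h b a)"
    using 1 prod_offdiag[of h n] by (simp add: h_def)
  ultimately show ?thesis unfolding 2 1 by simp
qed




locale kp =
  fixes A :: "real mat" and \<kappa> :: "nat \<Rightarrow> real" and piv :: "nat \<Rightarrow> nat" and N M :: nat
  assumes dr: "dim_row A = N" and dc: "dim_col A = M"
    and kmono: "\<And>i j. i < j \<Longrightarrow> j < M \<Longrightarrow> \<kappa> i < \<kappa> j"
    and rref: "rref_with_pivots A piv" and tnn: "totally_nonneg A"
begin

definition "Pset = piv ` {..<N}"
definition "Z = {(k,j). k<N \<and> j<M \<and> j \<notin> Pset \<and> A $$ (k,j) \<noteq> 0}"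
definition "Valid = {c \<in> {..<N} \<rightarrow>\<^sub>E {..<M}. \<forall>k<N. c k = piv k \<or> (k, c k) \<in> Z}"

lemma piv_lt: "k < N \<Longrightarrow> piv k < M"
  using rref unfolding rref_with_pivots_def dr dc by blast
lemma piv_mono: "k < l \<Longrightarrow> l < N \<Longrightarrow> piv k < piv l"
  using rref unfolding rref_with_pivots_def dr dc by blast
lemma piv_inj: "k < N \<Longrightarrow> l < N \<Longrightarrow> piv k = piv l \<Longrightarrow> k = l"
  by (metis linorder_neqE_nat order_less_irrefl piv_mono)
lemma A_piv: "k < N \<Longrightarrow> A $$ (k, piv k) = 1"
  using rref unfolding rref_with_pivots_def dr dc by blast
lemma A_piv0: "k < N \<Longrightarrow> l < N \<Longrightarrow> l \<noteq> k \<Longrightarrow> A $$ (l, piv k) = 0"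
  using rref unfolding rref_with_pivots_def dr dc by blast
lemma kinj: "i < M \<Longrightarrow> j < M \<Longrightarrow> i \<noteq> j \<Longrightarrow> \<kappa> i \<noteq> \<kappa> j"
  by (metis kmono linorder_neqE_nat order_less_irrefl)

lemma finite_Z: "finite Z"
  unfolding Z_def by (rule finite_subset[of _ "{..<N} \<times> {..<M}"]) auto

lemma Z_D: "(k,j) \<in> Z \<Longrightarrow> k < N \<and> j < M \<and> j \<notin> Pset \<and> A $$ (k,j) \<noteq> 0"
  unfolding Z_def by auto

lemma Z_notpiv: "(k,j) \<in> Z \<Longrightarrow> l < N \<Longrightarrow> j \<noteq> piv l"
  unfolding Z_def Pset_def by auto

lemma kp_inj: "a < N \<Longrightarrow> b < N \<Longrightarrow> a \<noteq> b \<Longrightarrow> \<kappa> (piv a) \<noteq> \<kappa> (piv b)"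
  by (metis kinj piv_lt piv_inj)
lemma kpj: "(k,j) \<in> Z \<Longrightarrow> l < N \<Longrightarrow> \<kappa> (piv l) \<noteq> \<kappa> j"
  by (metis Z_D Z_notpiv kinj piv_lt)

lemma VF_pos: "(\<And>a b. a < b \<Longrightarrow> b < n \<Longrightarrow> x a < x b) \<Longrightarrow> VF x n > 0"
  unfolding VF_def P2_def by (rule prod_pos) auto

lemma VF_piv_pos: "VF (\<kappa> \<circ> piv) N > 0"
  by (rule VF_pos) (simp add: kmono piv_mono piv_lt)

lemma sum_valid: "(\<Sum>c\<in>InjS N M. Lc A \<kappa> x y t c) = (\<Sum>c\<in>Valid. Lc A \<kappa> x y t c)"
proof -
  let ?All = "{..<N} \<rightarrow>\<^sub>E {..<M}"
  have fin: "finite ?All" by (rule finite_PiE) auto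
  have "(\<Sum>c\<in>InjS N M. Lc A \<kappa> x y t c) = (\<Sum>c\<in>?All. Lc A \<kappa> x y t c)"
  proof (rule sum.mono_neutral_left[OF fin])
    show "InjS N M \<subseteq> ?All" unfolding InjS_def by auto
    show "\<forall>c\<in>?All - InjS N M. Lc A \<kappa> x y t c = 0"
    proof
      fix c assume c: "c \<in> ?All - InjS N M"
      then have "\<not> inj_on c {..<N}" unfolding InjS_def by auto
      then obtain a b where ab: "a < N" "b < N" "a \<noteq> b" "c a = c b" unfolding inj_on_def by auto
      have "VF (\<kappa> \<circ> c) N = 0" by (rule VF_zero[OF ab(1,2,3)]) (simp add: ab(4))
      thus "Lc A \<kappa> x y t c = 0" unfolding Lc_def dr by simp
    qed
  qed
  also have "\<dots> = (\<Sum>c\<in>Valid. Lc A \<kappa> x y t c)"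
  proof (rule sum.mono_neutral_right[OF fin])
    show "Valid \<subseteq> ?All" unfolding Valid_def by auto
    show "\<forall>c\<in>?All - Valid. Lc A \<kappa> x y t c = 0"
    proof
      fix c assume c: "c \<in> ?All - Valid"
      then obtain k where k: "k < N" "c k \<noteq> piv k" "(k, c k) \<notin> Z" unfolding Valid_def by auto
      have ckM: "c k < M" using c k by auto
      have "A $$ (k, c k) = 0"
      proof (cases "c k \<in> Pset")
        case True
        then obtain l where l: "l < N" "c k = piv l" unfolding Pset_def by auto
        then have "l \<noteq> k" using k by auto
        then show ?thesis using A_piv0[OF l(1) k(1)] l by simp
      next
        case False
        then show ?thesis using k ckM unfolding Z_def by auto
      qed
      hence "(\<Prod>k<N. A $$ (k, c k)) = 0" using k(1) by (intro prod_zero) auto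
      thus "Lc A \<kappa> x y t c = 0" unfolding Lc_def dr by simp
    qed
  qed
  finally show ?thesis .
qed

lemma s_pos:
  assumes k: "k < N" and kj: "(k,j) \<in> Z"
  shows "A $$ (k,j) * (\<Prod>l\<in>{..<N}-{k}. (\<kappa> (piv l) - \<kappa> j) / (\<kappa> (piv l) - \<kappa> (piv k))) > 0"
proof -
  have jM: "j < M" and jP: "j \<notin> Pset" and Anz: "A $$ (k,j) \<noteq> 0" using Z_D[OF kj] by auto
  have jpiv: "\<And>l. l < N \<Longrightarrow> j \<noteq> piv l" using Z_notpiv[OF kj] .
  define I where "I = insert j (piv ` ({..<N} - {k}))"
  define c0 where "c0 = restrict (piv(k := j)) {..<N}"
  have IM: "I \<subseteq> {..<M}" unfolding I_def using jM piv_lt by auto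
  have finI: "finite I" unfolding I_def by simp
  have injp: "inj_on piv ({..<N} - {k})" by (rule inj_onI) (auto intro: piv_inj)
  have cI: "card I = N"
  proof -
    have "j \<notin> piv ` ({..<N} - {k})" using jpiv by auto
    hence "card I = Suc (card (piv ` ({..<N} - {k})))" unfolding I_def by simp
    also have "\<dots> = Suc (card ({..<N} - {k}))" using card_image[OF injp] by simp
    also have "\<dots> = N" using k by simp
    finally show ?thesis .
  qed
  have c0I: "c0 \<in> InjI N I"
  proof -
    have "c0 \<in> {..<N} \<rightarrow>\<^sub>E I" unfolding c0_def I_def by auto
    moreover have "inj_on c0 {..<N}"
      by (rule inj_onI) (auto simp: c0_def jpiv piv_inj split: if_splits)
    moreover have "c0 ` {..<N} = I"
    proof
      show "c0 ` {..<N} \<subseteq> I" unfolding c0_def I_def by auto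
      show "I \<subseteq> c0 ` {..<N}"
      proof
        fix i assume "i \<in> I"
        then consider "i = j" | l where "l < N" "l \<noteq> k" "i = piv l" unfolding I_def by auto
        then show "i \<in> c0 ` {..<N}"
        proof cases
          case 1 then show ?thesis using k unfolding c0_def by (auto intro!: image_eqI[of _ _ k])
        next
          case 2 then show ?thesis unfolding c0_def by (auto intro!: image_eqI[of _ _ l])
        qed
      qed
    qed
    ultimately show ?thesis unfolding InjI_def by simp
  qed
  have others: "(\<Prod>l<N. A $$ (l, c l)) = 0" if c: "c \<in> InjI N I" "c \<noteq> c0" for c
  proof (rule ccontr)
    assume "(\<Prod>l<N. A $$ (l, c l)) \<noteq> 0"
    hence nz: "\<And>l. l < N \<Longrightarrow> A $$ (l, c l) \<noteq> 0" by (auto simp: prod_zero_iff)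
    have cin: "\<And>l. l < N \<Longrightarrow> c l \<in> I" and ci: "inj_on c {..<N}" using c unfolding InjI_def by auto
    have cases: "\<And>l. l < N \<Longrightarrow> c l = j \<or> (l \<noteq> k \<and> c l = piv l)"
    proof -
      fix l assume l: "l < N"
      show "c l = j \<or> (l \<noteq> k \<and> c l = piv l)"
      proof (cases "c l = j")
        case False
        then obtain m where m: "m < N" "m \<noteq> k" "c l = piv m" using cin[OF l] unfolding I_def by auto
        have "m = l" using A_piv0[OF m(1) l] nz[OF l] m by auto
        then show ?thesis using m by simp
      qed simp
    qed
    have ck: "c k = j" using cases[OF k] by simp
    have "\<And>l. l < N \<Longrightarrow> c l = c0 l"
    proof -
      fix l assume l: "l < N"
      show "c l = c0 l"
      proof (cases "l = k")
        case True then show ?thesis using ck l unfolding c0_def by simp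
      next
        case False
        have "c l \<noteq> j" using ci ck False l k unfolding inj_on_def by (metis lessThan_iff)
        then show ?thesis using cases[OF l] False l unfolding c0_def by simp
      qed
    qed
    moreover have "\<And>l. \<not> l < N \<Longrightarrow> c l = c0 l"
      using c unfolding InjI_def c0_def by (auto simp: PiE_def extensional_def)
    ultimately have "c = c0" by (metis ext)
    with c show False by simp
  qed
  have p0: "(\<Prod>l<N. A $$ (l, c0 l)) = A $$ (k,j)"
  proof -
    have "(\<Prod>l<N. A $$ (l, c0 l)) = (\<Prod>l\<in>{k}. A $$ (l, c0 l))"
      by (rule prod.mono_neutral_right) (use k in \<open>auto simp: c0_def A_piv\<close>)
    thus ?thesis by (simp add: c0_def k)
  qed
  have "minor A I * VF (\<kappa> \<circ> (!) (sorted_list_of_set I)) N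
      = (\<Sum>c\<in>InjI N I. (\<Prod>l<N. A $$ (l, c l)) * VF (\<kappa> \<circ> c) N)"
    using minor_VF[OF finI, of A \<kappa>] cI dr by simp
  also have "\<dots> = (\<Prod>l<N. A $$ (l, c0 l)) * VF (\<kappa> \<circ> c0) N"
  proof (rule sum.remove[THEN trans])
    show "finite (InjI N I)" unfolding InjI_def
      by (rule finite_subset[OF _ finite_PiE[of "{..<N}" "\<lambda>_. I"]]) (auto simp: finI)
    show "c0 \<in> InjI N I" by (rule c0I)
    show "(\<Prod>l<N. A $$ (l, c0 l)) * VF (\<kappa> \<circ> c0) N
      + (\<Sum>c\<in>InjI N I - {c0}. (\<Prod>l<N. A $$ (l, c l)) * VF (\<kappa> \<circ> c) N)
      = (\<Prod>l<N. A $$ (l, c0 l)) * VF (\<kappa> \<circ> c0) N"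
      using others by (simp add: sum.neutral)
  qed
  finally have eq: "minor A I * VF (\<kappa> \<circ> (!) (sorted_list_of_set I)) N = A $$ (k,j) * VF (\<kappa> \<circ> c0) N"
    using p0 by simp
  have mn: "minor A I \<ge> 0" using tnn IM cI unfolding totally_nonneg_def dr dc by blast
  have vs: "VF (\<kappa> \<circ> (!) (sorted_list_of_set I)) N > 0"
  proof (rule VF_pos)
    fix a b assume ab: "a < b" "b < N"
    have "sorted_list_of_set I ! a < sorted_list_of_set I ! b" using sorted_nth_mono[OF finI ab(1)] ab cI by simp
    moreover have "sorted_list_of_set I ! b \<in> I"
      using ab cI finI by (metis length_sorted_list_of_set nth_mem set_sorted_list_of_set)
    ultimately show "(\<kappa> \<circ> (!) (sorted_list_of_set I)) a < (\<kappa> \<circ> (!) (sorted_list_of_set I)) b"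
      using IM kmono by auto
  qed
  have ge: "A $$ (k,j) * VF (\<kappa> \<circ> c0) N \<ge> 0" using mult_nonneg_nonneg[OF mn less_imp_le[OF vs]] eq by simp
  have ratio: "VF (\<kappa> \<circ> c0) N = VF (\<kappa> \<circ> piv) N
      * (\<Prod>k'\<in>{k}. \<Prod>l\<in>{..<N}-{k'}. ((\<kappa> \<circ> piv) l - (\<kappa> \<circ> c0) k') / ((\<kappa> \<circ> piv) l - (\<kappa> \<circ> piv) k'))
      * (\<Prod>(a,b)\<in>P2 N \<inter> ({k} \<times> {k}). Cr (\<kappa> \<circ> piv) (\<kappa> \<circ> c0) a b)"
  proof (rule VF_ratio)
    show "{k} \<subseteq> {..<N}" using k by simp
    show "\<And>l. l < N \<Longrightarrow> l \<notin> {k} \<Longrightarrow> (\<kappa> \<circ> c0) l = (\<kappa> \<circ> piv) l" by (simp add: c0_def)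
    show "\<And>a b. a < N \<Longrightarrow> b < N \<Longrightarrow> a \<noteq> b \<Longrightarrow> (\<kappa> \<circ> piv) a \<noteq> (\<kappa> \<circ> piv) b"
      using kp_inj by auto
    show "\<And>a b. a < N \<Longrightarrow> b < N \<Longrightarrow> a \<noteq> b \<Longrightarrow> b \<in> {k} \<Longrightarrow> (\<kappa> \<circ> piv) a \<noteq> (\<kappa> \<circ> c0) b"
      using kpj[OF kj] by (auto simp: c0_def)
  qed
  have empty: "P2 N \<inter> ({k} \<times> {k}) = {}" unfolding P2_def by auto
  define H where "H = (\<Prod>l\<in>{..<N}-{k}. (\<kappa> (piv l) - \<kappa> j) / (\<kappa> (piv l) - \<kappa> (piv k)))"
  have ratio': "VF (\<kappa> \<circ> c0) N = VF (\<kappa> \<circ> piv) N * H"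
    using ratio unfolding empty H_def by (simp add: c0_def k)
  have "A $$ (k,j) * H = (A $$ (k,j) * VF (\<kappa> \<circ> c0) N) / VF (\<kappa> \<circ> piv) N"
    using VF_piv_pos unfolding ratio' by simp
  hence "A $$ (k,j) * H \<ge> 0" using ge VF_piv_pos by simp
  moreover have "H \<noteq> 0"
    unfolding H_def using kpj[OF kj] kp_inj[OF _ k] by (auto simp: prod_zero_iff)
  ultimately show ?thesis using Anz unfolding H_def[symmetric] by (simp add: less_le)
qed

end



context kp begin

definition "nz = nz_entries A piv"
definition "g = gtilde A piv"

lemma nz_eq: "nz = sorted_list_of_set Z"
  unfolding nz_def nz_entries_def Z_def Pset_def dr dc by simp
lemma g_eq: "g = length nz" unfolding g_def gtilde_def nz_def by simp
lemma set_nz: "set nz = Z" unfolding nz_eq using finite_Z by simp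
lemma distinct_nz: "distinct nz" unfolding nz_eq by simp
lemma sorted_nz: "sorted_wrt (<) nz" unfolding nz_eq by (rule sorted_list_of_set.strict_sorted_key_list_of_set)
lemma nz_Z: "\<sigma> < g \<Longrightarrow> nz ! \<sigma> \<in> Z" using set_nz g_eq by (metis nth_mem)
lemma nz_ex: "p \<in> Z \<Longrightarrow> \<exists>\<sigma><g. nz ! \<sigma> = p" using set_nz g_eq by (metis in_set_conv_nth)
lemma nz_inj: "\<sigma> < g \<Longrightarrow> \<rho> < g \<Longrightarrow> nz ! \<sigma> = nz ! \<rho> \<Longrightarrow> \<sigma> = \<rho>"
  using distinct_nz g_eq by (simp add: nth_eq_iff_index_eq)
lemma nz_less: "\<sigma> < \<rho> \<Longrightarrow> \<rho> < g \<Longrightarrow> nz ! \<sigma> < nz ! \<rho>"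
  using sorted_nz g_eq by (simp add: sorted_wrt_nth_less)

lemma C_eq: "C_coef A piv \<kappa> \<sigma> \<rho> =
   (\<kappa> (piv (fst (nz!\<sigma>))) - \<kappa> (piv (fst (nz!\<rho>)))) * (\<kappa> (snd (nz!\<sigma>)) - \<kappa> (snd (nz!\<rho>))) /
   ((\<kappa> (piv (fst (nz!\<sigma>))) - \<kappa> (snd (nz!\<rho>))) * (\<kappa> (snd (nz!\<sigma>)) - \<kappa> (piv (fst (nz!\<rho>)))))"
  unfolding C_coef_def b_par_def c_par_def nz_def ..

lemma C_zero: "fst (nz!\<sigma>) = fst (nz!\<rho>) \<or> snd (nz!\<sigma>) = snd (nz!\<rho>) \<Longrightarrow> C_coef A piv \<kappa> \<sigma> \<rho> = 0"
  unfolding C_eq by auto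

definition T :: "real \<Rightarrow> real \<Rightarrow> real \<Rightarrow> (nat \<Rightarrow> nat) \<Rightarrow> real" where
  "T x y t m = (\<Prod>\<sigma><g. \<Prod>\<rho>\<in>{\<sigma><..<g}. C_coef A piv \<kappa> \<sigma> \<rho> ^ (m \<sigma> * m \<rho>)) *
        exp (\<Sum>\<sigma><g. real (m \<sigma>) * phi_tilde A piv \<kappa> \<sigma> x y t)"

lemma theta_eq: "theta_tilde A piv \<kappa> x y t = (\<Sum>m\<in>{..<g} \<rightarrow>\<^sub>E {0,1}. T x y t m)"
  unfolding theta_tilde_def T_def g_def Let_def by simp

definition mc :: "(nat \<Rightarrow> nat) \<Rightarrow> nat \<Rightarrow> nat" where
  "mc c = restrict (\<lambda>\<sigma>. if c (fst (nz!\<sigma>)) = snd (nz!\<sigma>) then 1 else 0) {..<g}"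

lemma prodC_zero:
  assumes "\<sigma> < g" "\<rho> < g" "\<sigma> \<noteq> \<rho>" "m \<sigma> = 1" "m \<rho> = 1"
    "fst (nz!\<sigma>) = fst (nz!\<rho>) \<or> snd (nz!\<sigma>) = snd (nz!\<rho>)"
  shows "(\<Prod>\<sigma><g. \<Prod>\<rho>\<in>{\<sigma><..<g}. C_coef A piv \<kappa> \<sigma> \<rho> ^ (m \<sigma> * m \<rho>)) = 0"
proof -
  define a where "a = min \<sigma> \<rho>"
  define b where "b = max \<sigma> \<rho>"
  have ab: "a < b" "b < g" "m a = 1" "m b = 1" using assms unfolding a_def b_def by (auto simp: min_def max_def)
  have "C_coef A piv \<kappa> a b = 0"
    using assms unfolding a_def b_def by (intro C_zero) (auto simp: min_def max_def)
  hence inner: "(\<Prod>\<rho>\<in>{a<..<g}. C_coef A piv \<kappa> a \<rho> ^ (m a * m \<rho>)) = 0"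
  proof (intro prod_zero)
    assume C0: "C_coef A piv \<kappa> a b = 0"
    show "\<exists>\<rho>\<in>{a<..<g}. C_coef A piv \<kappa> a \<rho> ^ (m a * m \<rho>) = 0"
      using ab C0 by (intro bexI[of _ b]) simp_all
  qed simp
  show ?thesis
  proof (rule prod_zero)
    show "\<exists>a'\<in>{..<g}. (\<Prod>\<rho>\<in>{a'<..<g}. C_coef A piv \<kappa> a' \<rho> ^ (m a' * m \<rho>)) = 0"
      using inner ab by (intro bexI[of _ a]) simp_all
  qed simp
qed

lemma mc_in: "mc c \<in> {..<g} \<rightarrow>\<^sub>E {0,1}" unfolding mc_def by auto

lemma mc_inj: "inj_on mc Valid"
proof (rule inj_onI)
  fix c c' assume c: "c \<in> Valid" and c': "c' \<in> Valid" and e: "mc c = mc c'"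
  have step: "d k = d' k" if d: "d \<in> Valid" "d' \<in> Valid" "mc d = mc d'" and k: "k < N" "d k \<noteq> piv k" for d d' k
  proof -
    have "(k, d k) \<in> Z" using d k unfolding Valid_def by auto
    then obtain \<sigma> where \<sigma>: "\<sigma> < g" "nz ! \<sigma> = (k, d k)" using nz_ex by blast
    have "mc d \<sigma> = 1" using \<sigma> unfolding mc_def by simp
    hence "mc d' \<sigma> = 1" using d by simp
    thus ?thesis using \<sigma> unfolding mc_def by (auto split: if_splits)
  qed
  show "c = c'"
  proof
    fix k
    show "c k = c' k"
    proof (cases "k < N")
      case True
      then show ?thesis using step[OF c c' e True] step[OF c' c e[symmetric] True] by metis
    next
      case False
      then show ?thesis using c c' unfolding Valid_def by (auto simp: PiE_def extensional_def)
    qed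
  qed
qed

lemma T_outside:
  assumes m: "m \<in> {..<g} \<rightarrow>\<^sub>E {0,1}" and nm: "m \<notin> mc ` Valid"
  shows "T x y t m = 0"
proof (cases "\<exists>\<sigma> \<rho>. \<sigma> < g \<and> \<rho> < g \<and> \<sigma> \<noteq> \<rho> \<and> m \<sigma> = 1 \<and> m \<rho> = 1 \<and> fst (nz!\<sigma>) = fst (nz!\<rho>)")
  case True
  then obtain \<sigma> \<rho> where "\<sigma> < g" "\<rho> < g" "\<sigma> \<noteq> \<rho>" "m \<sigma> = 1" "m \<rho> = 1" "fst (nz!\<sigma>) = fst (nz!\<rho>)" by blast
  then show ?thesis unfolding T_def using prodC_zero by simp
next
  case False
  define P where "P = (\<lambda>k \<sigma>. \<sigma> < g \<and> m \<sigma> = 1 \<and> fst (nz!\<sigma>) = k)"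
  define c where "c = restrict (\<lambda>k. if \<exists>\<sigma>. P k \<sigma> then snd (nz ! (SOME \<sigma>. P k \<sigma>)) else piv k) {..<N}"
  have uniq: "\<And>k \<sigma> \<rho>. P k \<sigma> \<Longrightarrow> P k \<rho> \<Longrightarrow> \<sigma> = \<rho>" using False unfolding P_def by blast
  have cP: "c k = snd (nz ! \<sigma>)" if "P k \<sigma>" "k < N" for k \<sigma>
  proof -
    have "P k (SOME \<sigma>. P k \<sigma>)" using that by (metis someI)
    hence "(SOME \<sigma>. P k \<sigma>) = \<sigma>" using uniq that by blast
    thus ?thesis using that unfolding c_def by auto
  qed
  have cN: "c k = piv k" if "\<not> (\<exists>\<sigma>. P k \<sigma>)" "k < N" for k using that unfolding c_def by auto
  have cV: "c \<in> Valid"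
  proof -
    have "\<forall>k<N. c k = piv k \<or> (k, c k) \<in> Z"
    proof (intro allI impI)
      fix k assume k: "k < N"
      show "c k = piv k \<or> (k, c k) \<in> Z"
      proof (cases "\<exists>\<sigma>. P k \<sigma>")
        case True
        then obtain \<sigma> where s: "P k \<sigma>" by blast
        hence "nz ! \<sigma> \<in> Z" "fst (nz!\<sigma>) = k" using nz_Z unfolding P_def by auto
        moreover have "c k = snd (nz ! \<sigma>)" using cP[OF s k] .
        ultimately show ?thesis by (metis prod.collapse)
      qed (use cN k in simp)
    qed
    moreover have "c \<in> {..<N} \<rightarrow>\<^sub>E {..<M}"
    proof -
      have "c k < M" if k: "k < N" for k
      proof (cases "\<exists>\<sigma>. P k \<sigma>")
        case True
        then obtain \<sigma> where s: "P k \<sigma>" by blast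
        hence "nz ! \<sigma> \<in> Z" using nz_Z unfolding P_def by auto
        thus ?thesis using cP[OF s k] Z_D by (metis prod.collapse)
      qed (use cN k piv_lt in simp)
      thus ?thesis unfolding c_def by auto
    qed
    ultimately show ?thesis unfolding Valid_def by simp
  qed
  have "mc c = m"
  proof
    fix \<sigma>
    show "mc c \<sigma> = m \<sigma>"
    proof (cases "\<sigma> < g")
      case False then show ?thesis using m unfolding mc_def by (auto simp: PiE_def extensional_def)
    next
      case True
      define k where "k = fst (nz!\<sigma>)"
      have kN: "k < N" using nz_Z[OF True] Z_D unfolding k_def by (metis prod.collapse)
      show ?thesis
      proof (cases "m \<sigma> = 1")
        case True': True
        then have "P k \<sigma>" unfolding P_def k_def using True by simp
        then show ?thesis using cP[OF _ kN] True True' unfolding mc_def k_def by simp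
      next
        case False': False
        then have m0: "m \<sigma> = 0" using m True by auto
        have "c k \<noteq> snd (nz!\<sigma>)"
        proof (cases "\<exists>\<rho>. P k \<rho>")
          case True
          then obtain \<rho> where r: "P k \<rho>" by blast
          have "c k = snd (nz!\<rho>)" using cP[OF r kN] .
          moreover have "\<rho> \<noteq> \<sigma>" using r False' unfolding P_def by auto
          moreover have "fst (nz!\<rho>) = fst (nz!\<sigma>)" using r unfolding P_def k_def by simp
          moreover have "\<rho> < g" using r unfolding P_def by simp
          ultimately show ?thesis using nz_inj[OF _ \<open>\<sigma> < g\<close>] by (metis prod.expand)
        next
          case False
          then have "c k = piv k" using cN kN by simp
          moreover have "snd (nz!\<sigma>) \<noteq> piv k" using nz_Z[OF \<open>\<sigma> < g\<close>] Z_notpiv kN by (metis prod.collapse)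
          ultimately show ?thesis by simp
        qed
        then show ?thesis using m0 True unfolding mc_def k_def by simp
      qed
    qed
  qed
  with cV nm show ?thesis by blast
qed

lemma rhs_reindex: "theta_tilde A piv \<kappa> x y t = (\<Sum>c\<in>Valid. T x y t (mc c))"
proof -
  have finV: "finite Valid" unfolding Valid_def
    by (rule finite_subset[OF _ finite_PiE[of "{..<N}" "\<lambda>_. {..<M}"]]) auto
  have "theta_tilde A piv \<kappa> x y t = (\<Sum>m\<in>mc ` Valid. T x y t m)"
    unfolding theta_eq
  proof (rule sum.mono_neutral_right)
    show "finite ({..<g} \<rightarrow>\<^sub>E {0::nat,1})" by (rule finite_PiE) auto
    show "mc ` Valid \<subseteq> {..<g} \<rightarrow>\<^sub>E {0,1}" by (rule image_subsetI) (rule mc_in)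
    show "\<forall>m\<in>({..<g} \<rightarrow>\<^sub>E {0,1}) - mc ` Valid. T x y t m = 0"
    proof (rule ballI)
      fix m assume "m \<in> ({..<g} \<rightarrow>\<^sub>E {0,1}) - mc ` Valid"
      then show "T x y t m = 0" by (elim DiffE) (rule T_outside)
    qed
  qed
  also have "\<dots> = (\<Sum>c\<in>Valid. T x y t (mc c))"
    by (rule sum.reindex[OF mc_inj, unfolded comp_def])
  finally show ?thesis .
qed

end



context kp begin

lemma W_eq:
  assumes kj: "(k,j) \<in> Z"
  shows "\<bar>A $$ (k,j)\<bar> * (\<Prod>l\<in>{..<N}-{k}. \<bar>\<kappa> (piv l) - \<kappa> j\<bar>) / (\<Prod>l\<in>{..<N}-{k}. \<bar>\<kappa> (piv l) - \<kappa> (piv k)\<bar>)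
       = A $$ (k,j) * (\<Prod>l\<in>{..<N}-{k}. (\<kappa> (piv l) - \<kappa> j) / (\<kappa> (piv l) - \<kappa> (piv k)))"
proof -
  have k: "k < N" using Z_D[OF kj] by simp
  let ?s = "A $$ (k,j) * (\<Prod>l\<in>{..<N}-{k}. (\<kappa> (piv l) - \<kappa> j) / (\<kappa> (piv l) - \<kappa> (piv k)))"
  have "?s > 0" by (rule s_pos[OF k kj])
  hence "?s = \<bar>?s\<bar>" by simp
  also have "\<bar>?s\<bar> = \<bar>A $$ (k,j)\<bar> * ((\<Prod>l\<in>{..<N}-{k}. \<bar>\<kappa> (piv l) - \<kappa> j\<bar>) / (\<Prod>l\<in>{..<N}-{k}. \<bar>\<kappa> (piv l) - \<kappa> (piv k)\<bar>))"
    by (simp add: abs_mult abs_prod abs_divide prod_dividef)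
  finally show ?thesis by simp
qed

lemma per_c:
  assumes c: "c \<in> Valid"
  shows "Lc A \<kappa> x y t c / E_fun \<kappa> Pset x y t = T x y t (mc c)"
proof (cases "inj_on c {..<N}")
  case False
  then obtain a b where ab: "a < N" "b < N" "a \<noteq> b" "c a = c b" unfolding inj_on_def by auto
  have "VF (\<kappa> \<circ> c) N = 0" by (rule VF_zero[OF ab(1,2,3)]) (simp add: ab(4))
  hence L0: "Lc A \<kappa> x y t c = 0" unfolding Lc_def dr by simp
  have cv: "\<And>k. k < N \<Longrightarrow> c k = piv k \<or> (k, c k) \<in> Z" using c unfolding Valid_def by auto
  have aZ: "(a, c a) \<in> Z"
  proof -
    { assume ca: "c a = piv a"
      have False
      proof (cases "c b = piv b")
        case True then show False using ca ab piv_inj by metis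
      next
        case False then have "(b, c b) \<in> Z" using cv[OF ab(2)] by blast
        then show False using Z_notpiv ab ca by metis
      qed }
    thus ?thesis using cv[OF ab(1)] by blast
  qed
  have bZ: "(b, c b) \<in> Z"
  proof -
    { assume cb: "c b = piv b"
      have False
      proof (cases "c a = piv a")
        case True then show False using cb ab piv_inj by metis
      next
        case False then have "(a, c a) \<in> Z" using cv[OF ab(1)] by blast
        then show False using Z_notpiv ab cb by metis
      qed }
    thus ?thesis using cv[OF ab(2)] by blast
  qed
  obtain \<sigma> where s: "\<sigma> < g" "nz ! \<sigma> = (a, c a)" using nz_ex[OF aZ] by blast
  obtain \<rho> where r: "\<rho> < g" "nz ! \<rho> = (b, c b)" using nz_ex[OF bZ] by blast
  have "\<sigma> \<noteq> \<rho>" using s r ab by auto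
  moreover have "mc c \<sigma> = 1" "mc c \<rho> = 1" using s r unfolding mc_def by simp_all
  ultimately have "(\<Prod>\<sigma><g. \<Prod>\<rho>\<in>{\<sigma><..<g}. C_coef A piv \<kappa> \<sigma> \<rho> ^ (mc c \<sigma> * mc c \<rho>)) = 0"
    using s r ab by (intro prodC_zero[of \<sigma> \<rho>]) simp_all
  hence "T x y t (mc c) = 0" unfolding T_def by simp
  with L0 show ?thesis by simp
next
  case True
  note cinj = True
  have cv: "\<And>k. k < N \<Longrightarrow> c k = piv k \<or> (k, c k) \<in> Z" using c unfolding Valid_def by auto
  have cM: "\<And>k. k < N \<Longrightarrow> c k < M" using c unfolding Valid_def by auto
  define R where "R = {k. k < N \<and> c k \<noteq> piv k}"
  define S where "S = {\<sigma>. \<sigma> < g \<and> mc c \<sigma> = 1}"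
  define row where "row = (\<lambda>\<sigma>. fst (nz ! \<sigma>))"
  have RN: "R \<subseteq> {..<N}" unfolding R_def by auto
  have cZ: "\<And>k. k \<in> R \<Longrightarrow> (k, c k) \<in> Z" using cv unfolding R_def by auto
  have S_nz: "\<And>\<sigma>. \<sigma> \<in> S \<Longrightarrow> \<sigma> < g \<and> nz ! \<sigma> = (row \<sigma>, c (row \<sigma>))"
    unfolding S_def mc_def row_def by (auto split: if_splits)
  have rowR: "\<And>\<sigma>. \<sigma> \<in> S \<Longrightarrow> row \<sigma> \<in> R"
  proof -
    fix \<sigma> assume s: "\<sigma> \<in> S"
    have "(row \<sigma>, c (row \<sigma>)) \<in> Z" using S_nz[OF s] nz_Z by metis
    thus "row \<sigma> \<in> R" unfolding R_def using Z_D Z_notpiv by blast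
  qed
  have row_inj: "inj_on row S"
  proof (rule inj_onI)
    fix \<sigma> \<rho> assume "\<sigma> \<in> S" "\<rho> \<in> S" "row \<sigma> = row \<rho>"
    thus "\<sigma> = \<rho>" using S_nz nz_inj by metis
  qed
  have row_im: "row ` S = R"
  proof
    show "row ` S \<subseteq> R" using rowR by blast
    show "R \<subseteq> row ` S"
    proof
      fix k assume k: "k \<in> R"
      obtain \<sigma> where s: "\<sigma> < g" "nz ! \<sigma> = (k, c k)" using nz_ex[OF cZ[OF k]] by blast
      have "\<sigma> \<in> S" using s unfolding S_def mc_def by simp
      moreover have "row \<sigma> = k" using s unfolding row_def by simp
      ultimately show "k \<in> row ` S" by blast
    qed
  qed
  have bij: "bij_betw row S R" using row_inj row_im by (simp add: bij_betw_def)
  have finS: "finite S" unfolding S_def by simp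
  have finR: "finite R" using RN finite_subset by blast
  define p where "p = \<kappa> \<circ> piv"
  define yy where "yy = \<kappa> \<circ> c"
  define hp where "hp = (\<lambda>k. \<Prod>l\<in>{..<N}-{k}. (p l - yy k) / (p l - p k))"
  define dx where "dx = (\<lambda>k. xi \<kappa> (c k) x y t - xi \<kappa> (piv k) x y t)"
  have phi: "phi_tilde A piv \<kappa> \<sigma> x y t = dx (row \<sigma>) + ln (A $$ (row \<sigma>, c (row \<sigma>)) * hp (row \<sigma>))"
    if s: "\<sigma> \<in> S" for \<sigma>
  proof -
    have e: "nz_entries A piv ! \<sigma> = (row \<sigma>, c (row \<sigma>))" using S_nz[OF s] unfolding nz_def by simp
    have "(row \<sigma>, c (row \<sigma>)) \<in> Z" using rowR[OF s] cZ by blast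
    from W_eq[OF this] show ?thesis
      unfolding phi_tilde_def phi0_def e dr dx_def hp_def p_def yy_def by simp
  qed
  have expS: "exp (\<Sum>\<sigma><g. real (mc c \<sigma>) * phi_tilde A piv \<kappa> \<sigma> x y t)
      = (\<Prod>k\<in>R. exp (dx k) * (A $$ (k, c k) * hp k))"
  proof -
    have "exp (\<Sum>\<sigma><g. real (mc c \<sigma>) * phi_tilde A piv \<kappa> \<sigma> x y t)
        = (\<Prod>\<sigma><g. exp (real (mc c \<sigma>) * phi_tilde A piv \<kappa> \<sigma> x y t))" by (simp add: exp_sum)
    also have "\<dots> = (\<Prod>\<sigma>\<in>S. exp (phi_tilde A piv \<kappa> \<sigma> x y t))"
    proof (rule prod.mono_neutral_cong_right)
      show "S \<subseteq> {..<g}" unfolding S_def by auto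
      show "\<forall>i\<in>{..<g} - S. exp (real (mc c i) * phi_tilde A piv \<kappa> i x y t) = 1"
        unfolding S_def mc_def by auto
      show "\<And>i. i \<in> S \<Longrightarrow> exp (real (mc c i) * phi_tilde A piv \<kappa> i x y t) = exp (phi_tilde A piv \<kappa> i x y t)"
        unfolding S_def by simp
    qed simp
    also have "\<dots> = (\<Prod>\<sigma>\<in>S. exp (dx (row \<sigma>) + ln (A $$ (row \<sigma>, c (row \<sigma>)) * hp (row \<sigma>))))"
      by (rule prod.cong[OF refl]) (simp add: phi)
    also have "\<dots> = (\<Prod>k\<in>R. exp (dx k + ln (A $$ (k, c k) * hp k)))"
      using prod.reindex_bij_betw[OF bij, of "\<lambda>k. exp (dx k + ln (A $$ (k, c k) * hp k))"] by simp
    also have "\<dots> = (\<Prod>k\<in>R. exp (dx k) * (A $$ (k, c k) * hp k))"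
    proof (rule prod.cong[OF refl])
      fix k assume k: "k \<in> R"
      have "A $$ (k, c k) * hp k > 0"
        using s_pos[OF _ cZ[OF k]] k unfolding R_def hp_def p_def yy_def by simp
      thus "exp (dx k + ln (A $$ (k, c k) * hp k)) = exp (dx k) * (A $$ (k, c k) * hp k)"
        by (simp add: exp_add)
    qed
    finally show ?thesis .
  qed
  define Q where "Q = {(\<sigma>,\<rho>). \<sigma> < \<rho> \<and> \<sigma> \<in> S \<and> \<rho> \<in> S}"
  have PC: "(\<Prod>\<sigma><g. \<Prod>\<rho>\<in>{\<sigma><..<g}. C_coef A piv \<kappa> \<sigma> \<rho> ^ (mc c \<sigma> * mc c \<rho>))
      = (\<Prod>(\<sigma>,\<rho>)\<in>Q. C_coef A piv \<kappa> \<sigma> \<rho>)"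
  proof -
    have "(\<Prod>\<sigma><g. \<Prod>\<rho>\<in>{\<sigma><..<g}. C_coef A piv \<kappa> \<sigma> \<rho> ^ (mc c \<sigma> * mc c \<rho>))
       = (\<Prod>z\<in>Sigma {..<g} (\<lambda>\<sigma>. {\<sigma><..<g}). C_coef A piv \<kappa> (fst z) (snd z) ^ (mc c (fst z) * mc c (snd z)))"
      by (subst prod.Sigma) (auto simp: case_prod_beta')
    also have "\<dots> = (\<Prod>z\<in>Q. C_coef A piv \<kappa> (fst z) (snd z))"
    proof (rule prod.mono_neutral_cong_right)
      show "Q \<subseteq> Sigma {..<g} (\<lambda>\<sigma>. {\<sigma><..<g})" unfolding Q_def S_def by auto
      show "\<forall>z\<in>Sigma {..<g} (\<lambda>\<sigma>. {\<sigma><..<g}) - Q. C_coef A piv \<kappa> (fst z) (snd z) ^ (mc c (fst z) * mc c (snd z)) = 1"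
        unfolding Q_def S_def mc_def by auto
      show "\<And>z. z \<in> Q \<Longrightarrow> C_coef A piv \<kappa> (fst z) (snd z) ^ (mc c (fst z) * mc c (snd z)) = C_coef A piv \<kappa> (fst z) (snd z)"
        unfolding Q_def S_def by auto
    qed simp
    finally show ?thesis by (simp add: case_prod_beta')
  qed
  have Qbij: "bij_betw (\<lambda>(\<sigma>,\<rho>). (row \<sigma>, row \<rho>)) Q (P2 N \<inter> (R \<times> R))"
  proof -
    have less: "row \<sigma> < row \<rho>" if "\<sigma> \<in> S" "\<rho> \<in> S" "\<sigma> < \<rho>" for \<sigma> \<rho>
    proof -
      have "nz ! \<sigma> < nz ! \<rho>" using nz_less that S_nz by blast
      hence "row \<sigma> \<le> row \<rho>" unfolding row_def by (metis less_prod_def' order_less_imp_le order.refl prod.collapse)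
      moreover have "row \<sigma> \<noteq> row \<rho>" using row_inj that unfolding inj_on_def by auto
      ultimately show ?thesis by simp
    qed
    have "inj_on (\<lambda>(\<sigma>,\<rho>). (row \<sigma>, row \<rho>)) Q"
      using row_inj unfolding Q_def inj_on_def by auto
    moreover have "(\<lambda>(\<sigma>,\<rho>). (row \<sigma>, row \<rho>)) ` Q = P2 N \<inter> (R \<times> R)"
    proof
      show "(\<lambda>(\<sigma>,\<rho>). (row \<sigma>, row \<rho>)) ` Q \<subseteq> P2 N \<inter> (R \<times> R)"
        using less rowR RN unfolding Q_def P2_def by auto
      show "P2 N \<inter> (R \<times> R) \<subseteq> (\<lambda>(\<sigma>,\<rho>). (row \<sigma>, row \<rho>)) ` Q"
      proof
        fix z assume z: "z \<in> P2 N \<inter> (R \<times> R)"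
        then obtain a b where zab: "z = (a,b)" "a < b" "a \<in> R" "b \<in> R" unfolding P2_def by auto
        obtain \<sigma> where s: "\<sigma> \<in> S" "row \<sigma> = a" using row_im zab by blast
        obtain \<rho> where r: "\<rho> \<in> S" "row \<rho> = b" using row_im zab by blast
        have "\<sigma> < \<rho>"
        proof (rule ccontr)
          assume "\<not> \<sigma> < \<rho>"
          moreover have "\<sigma> \<noteq> \<rho>" using s r zab by auto
          ultimately have "\<rho> < \<sigma>" by simp
          hence "b < a" using less[OF r(1) s(1)] s r by simp
          thus False using zab by simp
        qed
        hence "(\<sigma>,\<rho>) \<in> Q" using s r unfolding Q_def by simp
        thus "z \<in> (\<lambda>(\<sigma>,\<rho>). (row \<sigma>, row \<rho>)) ` Q" using s r zab by force
      qed
    qed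
    ultimately show ?thesis by (simp add: bij_betw_def)
  qed
  have CQ: "(\<Prod>(\<sigma>,\<rho>)\<in>Q. C_coef A piv \<kappa> \<sigma> \<rho>) = (\<Prod>(a,b)\<in>P2 N \<inter> (R \<times> R). Cr p yy a b)"
  proof -
    have "(\<Prod>(\<sigma>,\<rho>)\<in>Q. C_coef A piv \<kappa> \<sigma> \<rho>) = (\<Prod>(\<sigma>,\<rho>)\<in>Q. Cr p yy (row \<sigma>) (row \<rho>))"
    proof (rule prod.cong[OF refl])
      fix z assume "z \<in> Q"
      then obtain \<sigma> \<rho> where z: "z = (\<sigma>,\<rho>)" "\<sigma> \<in> S" "\<rho> \<in> S" unfolding Q_def by auto
      show "(\<lambda>(\<sigma>,\<rho>). C_coef A piv \<kappa> \<sigma> \<rho>) z = (\<lambda>(\<sigma>,\<rho>). Cr p yy (row \<sigma>) (row \<rho>)) z"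
        using S_nz[OF z(2)] S_nz[OF z(3)] unfolding z(1) C_eq Cr_def p_def yy_def by simp
    qed
    also have "\<dots> = (\<Prod>(a,b)\<in>P2 N \<inter> (R \<times> R). Cr p yy a b)"
      using prod.reindex_bij_betw[OF Qbij, of "\<lambda>(a,b). Cr p yy a b"] by (simp add: case_prod_beta')
    finally show ?thesis .
  qed
  have Tval: "T x y t (mc c) = (\<Prod>(a,b)\<in>P2 N \<inter> (R \<times> R). Cr p yy a b) * (\<Prod>k\<in>R. exp (dx k) * (A $$ (k, c k) * hp k))"
    unfolding T_def PC CQ expS ..
  have EP: "E_fun \<kappa> Pset x y t = VF p N * exp (\<Sum>k<N. xi \<kappa> (piv k) x y t)"
    unfolding p_def Pset_def by (rule E_fun_mono) (simp_all add: piv_mono)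
  have ratio: "VF yy N = VF p N * (\<Prod>k\<in>R. hp k) * (\<Prod>(a,b)\<in>P2 N \<inter> (R \<times> R). Cr p yy a b)"
    unfolding hp_def
  proof (rule VF_ratio[OF RN])
    show "\<And>k. k < N \<Longrightarrow> k \<notin> R \<Longrightarrow> yy k = p k" unfolding R_def yy_def p_def by auto
    show "\<And>a b. a < N \<Longrightarrow> b < N \<Longrightarrow> a \<noteq> b \<Longrightarrow> p a \<noteq> p b" unfolding p_def using kp_inj by simp
    show "\<And>a b. a < N \<Longrightarrow> b < N \<Longrightarrow> a \<noteq> b \<Longrightarrow> b \<in> R \<Longrightarrow> p a \<noteq> yy b"
      unfolding p_def yy_def using kpj cZ by (simp add: o_def) blast
  qed
  have prodA: "(\<Prod>k<N. A $$ (k, c k)) = (\<Prod>k\<in>R. A $$ (k, c k))"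
    by (rule prod.mono_neutral_right) (auto simp: R_def A_piv)
  have expR: "exp (\<Sum>k<N. xi \<kappa> (c k) x y t) / exp (\<Sum>k<N. xi \<kappa> (piv k) x y t) = (\<Prod>k\<in>R. exp (dx k))"
  proof -
    have "exp (\<Sum>k<N. xi \<kappa> (c k) x y t) / exp (\<Sum>k<N. xi \<kappa> (piv k) x y t) = exp (\<Sum>k<N. dx k)"
      unfolding dx_def by (simp add: sum_subtractf exp_diff)
    also have "\<dots> = (\<Prod>k<N. exp (dx k))" by (simp add: exp_sum)
    also have "\<dots> = (\<Prod>k\<in>R. exp (dx k))"
      by (rule prod.mono_neutral_right) (auto simp: R_def dx_def)
    finally show ?thesis .
  qed
  have "Lc A \<kappa> x y t c / E_fun \<kappa> Pset x y t
      = (\<Prod>k\<in>R. A $$ (k, c k)) * (VF yy N / VF p N) * (exp (\<Sum>k<N. xi \<kappa> (c k) x y t) / exp (\<Sum>k<N. xi \<kappa> (piv k) x y t))"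
    unfolding Lc_def dr EP prodA yy_def by simp
  also have "\<dots> = (\<Prod>k\<in>R. A $$ (k, c k)) * ((\<Prod>k\<in>R. hp k) * (\<Prod>(a,b)\<in>P2 N \<inter> (R \<times> R). Cr p yy a b)) * (\<Prod>k\<in>R. exp (dx k))"
    unfolding expR ratio using VF_piv_pos unfolding p_def by simp
  also have "\<dots> = T x y t (mc c)"
    unfolding Tval prod.distrib by (simp add: mult_ac)
  finally show ?thesis .
qed

theorem main:
  "tau A \<kappa> x y t / E_fun \<kappa> Pset x y t = theta_tilde A piv \<kappa> x y t"
proof -
  have "tau A \<kappa> x y t = (\<Sum>c\<in>Valid. Lc A \<kappa> x y t c)"
    using tau_expand[of A \<kappa> x y t] sum_valid unfolding dr dc by simp
  hence "tau A \<kappa> x y t / E_fun \<kappa> Pset x y t = (\<Sum>c\<in>Valid. Lc A \<kappa> x y t c / E_fun \<kappa> Pset x y t)"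
    by (simp add: sum_divide_distrib)
  also have "\<dots> = (\<Sum>c\<in>Valid. T x y t (mc c))" by (rule sum.cong[OF refl]) (rule per_c)
  also have "\<dots> = theta_tilde A piv \<kappa> x y t" by (rule rhs_reindex[symmetric])
  finally show ?thesis .
qed

end


theorem mainTheorem7:
  fixes A :: "real mat" and \<kappa> :: "nat \<Rightarrow> real" and piv :: "nat \<Rightarrow> nat"
    and N M :: nat and x y t :: real
  assumes "dim_row A = N" and "dim_col A = M" and "N < M"
    and "\<And>i j. i < j \<Longrightarrow> j < M \<Longrightarrow> \<kappa> i < \<kappa> j"
    and "rref_with_pivots A piv"
    and "totally_nonneg A"
    and "irreducible_rref A piv"
  shows "tau A \<kappa> x y t / E_fun \<kappa> (piv ` {..<N}) x y t = theta_tilde A piv \<kappa> x y t"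
proof -
  interpret K: kp A \<kappa> piv N M
    by (unfold_locales) (use assms in auto)
  show ?thesis using K.main[of x y t] unfolding K.Pset_def .
qed

end
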